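(* Let $X$ be a vector field on $\mathbb{S}^1$ which is not (the restriction of) a Killing vector field, with support function $\phi_X$. Then any two distinct spacelike support planes of $\mathrm{epi}^+(\phi_X^-)$ at points of $\mathrm{gr}(\phi_X^-|_{\mathbb{D}^2})$ (resp. of $\mathrm{epi}^-(\phi_X^+)$ at points of $\mathrm{gr}(\phi_X^+|_{\mathbb{D}^2})$) intersect in a spacelike geodesic of $\mathbb{D}^2\times\mathbb{R}$.
   Context: $\mathbb{R}^{1,2}$ is $\mathbb{R}^3$ with $\langle x,y\rangle=-x_0y_0+x_1y_1+x_2y_2$; $\mathbb{D}^2$ is the open unit disk, $\mathbb{S}^1$ its boundary. A vector field $X$ on $\mathbb{S}^1$ is $X(z)=iz\phi_X(z)$; it is the restriction of a Killing field iff $\phi_X(z)=\langle(1,z),\sigma\rangle$ for some $\sigma\in\mathbb{R}^{1,2}$. $\phi_X^-(\eta)=\sup\{a(\eta):a\text{ affine},a|_{\mathbb{S}^1}\le\phi_X\}$, $\phi_X^+(\eta)=\inf\{a(\eta):a\text{ affine},a|_{\mathbb{S}^1}\ge\phi_X\}$ for $\eta\in\overline{\mathbb{D}^2}$; $\mathrm{epi}^+(\phi_X^-)=\{(\eta,t)\in\overline{\mathbb{D}^2}\times\mathbb{R}:t\ge\phi_X^-(\eta)\}$, $\mathrm{epi}^-(\phi_X^+)=\{(\eta,t):t\le\phi_X^+(\eta)\}$. Spacelike planes are the non-vertical planes $P_\sigma=\{(\eta,t)\in\mathbb{D}^2\times\mathbb{R}:t=\langle(1,\eta),\sigma\rangle\}$,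 $\sigma\in\mathbb{R}^{1,2}$. $P_\sigma$ is a support plane of $\mathrm{epi}^+(\phi_X^-)$ at a point of $\mathrm{gr}(\phi_X^-|_{\mathbb{D}^2})$ if $\langle(1,\eta),\sigma\rangle\le\phi_X^-(\eta)$ for all $\eta\in\mathbb{D}^2$ with equality at some $\eta_0\in\mathbb{D}^2$ (resp. for $\mathrm{epi}^-(\phi^+_X)$: $\ge\phi_X^+$ with equality somewhere). A spacelike geodesic of $\mathbb{D}^2\times\mathbb{R}$ is a nonempty intersection of $\mathbb{D}^2\times\mathbb{R}$ with an affine line of $\mathbb{R}^3$ that is not vertical (not of the form $\{p\}\times\mathbb{R}$). *)

theory Defs
  imports "HOL-Analysis.Analysis"
begin

text \<open>Minkowski space R^{1,2}: a vector (x0,x1,x2) is encoded as (x0, x1 + i x2) :: real \<times> complex.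
  Points of the plane R^2 (disk, circle) are encoded as complex numbers.\<close>

definition lor :: "real \<times> complex \<Rightarrow> real \<times> complex \<Rightarrow> real" where
  "lor x y = - fst x * fst y + Re (snd x) * Re (snd y) + Im (snd x) * Im (snd y)"

text \<open>Support function phi of a vector field X(z) = i z phi(z) on S^1; X is (the restriction of)
  a Killing field iff phi(z) = <(1,z),sigma> on S^1 for some sigma.\<close>

definition killing_support :: "(complex \<Rightarrow> real) \<Rightarrow> bool" where
  "killing_support \<phi> \<longleftrightarrow> (\<exists>\<sigma>. \<forall>z\<in>sphere 0 1. \<phi> z = lor (1, z) \<sigma>)"

definition affine_fun :: "(complex \<Rightarrow> real) \<Rightarrow> bool" where
  "affine_fun a \<longleftrightarrow> (\<exists>c b1 b2. \<forall>\<eta>. a \<eta> = c + b1 * Re \<eta> + b2 * Im \<eta>)"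

definition phi_minus :: "(complex \<Rightarrow> real) \<Rightarrow> complex \<Rightarrow> real" where
  "phi_minus \<phi> \<eta> = Sup {a \<eta> | a. affine_fun a \<and> (\<forall>z\<in>sphere 0 1. a z \<le> \<phi> z)}"

definition phi_plus :: "(complex \<Rightarrow> real) \<Rightarrow> complex \<Rightarrow> real" where
  "phi_plus \<phi> \<eta> = Inf {a \<eta> | a. affine_fun a \<and> (\<forall>z\<in>sphere 0 1. a z \<ge> \<phi> z)}"

definition spacelike_plane :: "real \<times> complex \<Rightarrow> (complex \<times> real) set" where
  "spacelike_plane \<sigma> = {(\<eta>, t). \<eta> \<in> ball 0 1 \<and> t = lor (1, \<eta>) \<sigma>}"

definition support_plane_epi_plus :: "(complex \<Rightarrow> real) \<Rightarrow> real \<times> complex \<Rightarrow> bool" where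
  "support_plane_epi_plus \<phi> \<sigma> \<longleftrightarrow>
     (\<forall>\<eta>\<in>ball 0 1. lor (1, \<eta>) \<sigma> \<le> phi_minus \<phi> \<eta>) \<and>
     (\<exists>\<eta>0\<in>ball 0 1. lor (1, \<eta>0) \<sigma> = phi_minus \<phi> \<eta>0)"

definition support_plane_epi_minus :: "(complex \<Rightarrow> real) \<Rightarrow> real \<times> complex \<Rightarrow> bool" where
  "support_plane_epi_minus \<phi> \<sigma> \<longleftrightarrow>
     (\<forall>\<eta>\<in>ball 0 1. lor (1, \<eta>) \<sigma> \<ge> phi_plus \<phi> \<eta>) \<and>
     (\<exists>\<eta>0\<in>ball 0 1. lor (1, \<eta>0) \<sigma> = phi_plus \<phi> \<eta>0)"

definition spacelike_geodesic :: "(complex \<times> real) set \<Rightarrow> bool" where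
  "spacelike_geodesic S \<longleftrightarrow>
     S \<noteq> {} \<and>
     (\<exists>p v::complex \<times> real. fst v \<noteq> 0 \<and>
        S = (ball 0 1 \<times> UNIV) \<inter> {p + r *\<^sub>R v | r. True})"

end

theory Submission
  imports Defs
begin

lemma lor_seg: "lor (1, a + of_real s * (b - a)) \<sigma> = (1-s) * lor (1,a) \<sigma> + s * lor (1,b) \<sigma>"
  by (simp add: lor_def algebra_simps)

lemma zero_exists:
  fixes a b :: complex and f :: "complex \<Rightarrow> real"
  assumes "a \<in> ball 0 1" "b \<in> ball 0 1" "f a \<ge> 0" "f b \<le> 0"
    and aff: "\<And>s. f (a + of_real s * (b - a)) = (1-s) * f a + s * f b"
  shows "\<exists>\<eta>\<in>ball 0 1. f \<eta> = 0"
proof (cases "f a = f b")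
  case True
  then show ?thesis using assms by force
next
  case False
  define s where "s = f a / (f a - f b)"
  have s0: "0 \<le> s" and s1: "s \<le> 1" using assms False by (auto simp: s_def field_simps)
  have "a + of_real s * (b - a) \<in> closed_segment a b"
    using s0 s1 unfolding closed_segment_def by (auto simp: algebra_simps scaleR_conv_of_real)
  moreover have "closed_segment a b \<subseteq> ball 0 1"
    using assms(1,2) convex_ball[of 0 1] unfolding convex_contains_segment by blast
  moreover have "f (a + of_real s * (b - a)) = 0"
    unfolding aff using False by (simp add: s_def field_simps)
  ultimately show ?thesis by blast
qed

lemma geod:
  assumes e1: "\<eta>1 \<in> ball 0 1" and eq: "lor (1,\<eta>1) \<sigma> = lor (1,\<eta>1) \<sigma>'"
    and ne: "spacelike_plane \<sigma> \<noteq> spacelike_plane \<sigma>'"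
  shows "spacelike_geodesic (spacelike_plane \<sigma> \<inter> spacelike_plane \<sigma>')"
proof -
  obtain s0 s1 where sd: "\<sigma> = (s0, s1)" by fastforce
  obtain t0 t1 where td: "\<sigma>' = (t0, t1)" by fastforce
  define b where "b = s1 - t1"
  have bnz: "b \<noteq> 0"
  proof
    assume "b = 0"
    then have "s1 = t1" by (simp add: b_def)
    moreover then have "s0 = t0" using eq by (simp add: sd td lor_def)
    ultimately show False using ne sd td by simp
  qed
  define w where "w = \<i> * b"
  define v where "v = (w, Re w * Re s1 + Im w * Im s1)"
  define p where "p = (\<eta>1, lor (1,\<eta>1) \<sigma>)"
  have n: "(Re b)^2 + (Im b)^2 \<noteq> 0" using bnz
    by (metis complex_eq_0)
  have "spacelike_plane \<sigma> \<inter> spacelike_plane \<sigma>' = (ball 0 1 \<times> UNIV) \<inter> {p + r *\<^sub>R v | r. True}"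
  proof (rule set_eqI, clarify)
    fix \<eta> :: complex and t :: real
    show "((\<eta>, t) \<in> spacelike_plane \<sigma> \<inter> spacelike_plane \<sigma>') =
          ((\<eta>, t) \<in> (ball 0 1 \<times> UNIV) \<inter> {p + r *\<^sub>R v | r. True})"
    proof
      assume h: "(\<eta>, t) \<in> spacelike_plane \<sigma> \<inter> spacelike_plane \<sigma>'"
      then have hb: "\<eta> \<in> ball 0 1" and ht: "t = lor (1,\<eta>) \<sigma>" and hd: "lor (1,\<eta>) \<sigma> = lor (1,\<eta>) \<sigma>'"
        by (auto simp: spacelike_plane_def)
      define x where "x = \<eta> - \<eta>1"
      have lin: "Re b * Re x + Im b * Im x = 0"
        using hd eq by (simp add: sd td lor_def x_def b_def algebra_simps)
      define r where "r = (Re b * Im x - Im b * Re x) / ((Re b)^2 + (Im b)^2)"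
      have rx1: "r * (- Im b) = Re x"
      proof -
        have "Re b * (Re b * Re x + Im b * Im x) = 0" using lin by simp
        then have "Re b * Im b * Im x = - (Re b * Re b * Re x)"
          unfolding distrib_left by (simp add: algebra_simps add_eq_0_iff)
        then show ?thesis using n unfolding r_def by (simp add: field_simps power2_eq_square) 
      qed
      have rx2: "r * Re b = Im x"
      proof -
        have "Im b * (Re b * Re x + Im b * Im x) = 0" using lin by simp
        then have "Re b * Im b * Re x = - (Im b * Im b * Im x)"
          unfolding distrib_left by (simp add: algebra_simps add_eq_0_iff)
        then show ?thesis using n unfolding r_def by (simp add: field_simps power2_eq_square) 
      qed
      have "\<eta> = \<eta>1 + r *\<^sub>R w"
        using rx1 rx2 by (simp add: complex_eq_iff w_def x_def algebra_simps)
      moreover have "t = lor (1,\<eta>1) \<sigma> + r * (Re w * Re s1 + Im w * Im s1)"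
      proof -
        have r1: "Re \<eta> = Re \<eta>1 + r * Re w" "Im \<eta> = Im \<eta>1 + r * Im w"
          using rx1 rx2 by (simp_all add: w_def x_def algebra_simps)
        show ?thesis unfolding ht sd lor_def by (simp add: r1 algebra_simps)
      qed
      ultimately show "(\<eta>, t) \<in> (ball 0 1 \<times> UNIV) \<inter> {p + r *\<^sub>R v | r. True}"
        using hb by (auto simp: p_def v_def)
    next
      assume "(\<eta>, t) \<in> (ball 0 1 \<times> UNIV) \<inter> {p + r *\<^sub>R v | r. True}"
      then obtain r where hb: "\<eta> \<in> ball 0 1" and hr: "(\<eta>, t) = p + r *\<^sub>R v" by auto
      then have he: "\<eta> = \<eta>1 + r *\<^sub>R w" and ht: "t = lor (1,\<eta>1) \<sigma> + r * (Re w * Re s1 + Im w * Im s1)"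
        by (auto simp: p_def v_def)
      have "t = lor (1,\<eta>) \<sigma>" using ht he by (simp add: sd lor_def algebra_simps)
      moreover have "lor (1,\<eta>) \<sigma> = lor (1,\<eta>) \<sigma>'"
      proof -
        have r1: "Re \<eta> = Re \<eta>1 - r * (Im s1 - Im t1)" "Im \<eta> = Im \<eta>1 + r * (Re s1 - Re t1)"
          unfolding he by (simp_all add: w_def b_def scaleR_conv_of_real algebra_simps)
        show ?thesis using eq unfolding sd td lor_def by (simp add: r1 algebra_simps)
      qed
      ultimately show "(\<eta>, t) \<in> spacelike_plane \<sigma> \<inter> spacelike_plane \<sigma>'"
        using hb by (simp add: spacelike_plane_def)
    qed
  qed
  moreover have "p \<in> spacelike_plane \<sigma> \<inter> spacelike_plane \<sigma>'"
    using e1 eq by (simp add: p_def spacelike_plane_def)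
  moreover have "fst v \<noteq> 0" using bnz by (simp add: v_def w_def)
  ultimately show ?thesis unfolding spacelike_geodesic_def by blast
qed

theorem lemma4p1:
  fixes \<phi> :: "complex \<Rightarrow> real"
  assumes cont: "continuous_on (sphere 0 1) \<phi>"
    and not_killing: "\<not> killing_support \<phi>"
  shows "(\<forall>\<sigma> \<sigma>'. support_plane_epi_plus \<phi> \<sigma> \<and> support_plane_epi_plus \<phi> \<sigma>'
            \<and> spacelike_plane \<sigma> \<noteq> spacelike_plane \<sigma>'
            \<longrightarrow> spacelike_geodesic (spacelike_plane \<sigma> \<inter> spacelike_plane \<sigma>'))
       \<and> (\<forall>\<sigma> \<sigma>'. support_plane_epi_minus \<phi> \<sigma> \<and> support_plane_epi_minus \<phi> \<sigma>'
            \<and> spacelike_plane \<sigma> \<noteq> spacelike_plane \<sigma>'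
            \<longrightarrow> spacelike_geodesic (spacelike_plane \<sigma> \<inter> spacelike_plane \<sigma>'))"
proof (intro conjI allI impI; elim conjE)
  fix \<sigma> \<sigma>'
  assume h1: "support_plane_epi_plus \<phi> \<sigma>" and h2: "support_plane_epi_plus \<phi> \<sigma>'"
    and ne: "spacelike_plane \<sigma> \<noteq> spacelike_plane \<sigma>'"
  obtain a where a: "a \<in> ball 0 1" "lor (1,a) \<sigma> = phi_minus \<phi> a"
    using h1 unfolding support_plane_epi_plus_def by blast
  obtain b where b: "b \<in> ball 0 1" "lor (1,b) \<sigma>' = phi_minus \<phi> b"
    using h2 unfolding support_plane_epi_plus_def by blast
  have "\<exists>\<eta>\<in>ball 0 1. (\<lambda>\<eta>. lor (1,\<eta>) \<sigma> - lor (1,\<eta>) \<sigma>') \<eta> = 0"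
    apply (rule zero_exists[OF a(1) b(1)])
       apply (use h1 h2 a b in \<open>auto simp: support_plane_epi_plus_def\<close>)[2]
    by (simp only: lor_seg) (simp add: algebra_simps)
  then obtain \<eta> where "\<eta> \<in> ball 0 1" "lor (1,\<eta>) \<sigma> = lor (1,\<eta>) \<sigma>'" by auto
  then show "spacelike_geodesic (spacelike_plane \<sigma> \<inter> spacelike_plane \<sigma>')"
    using geod ne by blast
next
  fix \<sigma> \<sigma>'
  assume h1: "support_plane_epi_minus \<phi> \<sigma>" and h2: "support_plane_epi_minus \<phi> \<sigma>'"
    and ne: "spacelike_plane \<sigma> \<noteq> spacelike_plane \<sigma>'"
  obtain a where a: "a \<in> ball 0 1" "lor (1,a) \<sigma> = phi_plus \<phi> a"
    using h1 unfolding support_plane_epi_minus_def by blast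
  obtain b where b: "b \<in> ball 0 1" "lor (1,b) \<sigma>' = phi_plus \<phi> b"
    using h2 unfolding support_plane_epi_minus_def by blast
  have "\<exists>\<eta>\<in>ball 0 1. (\<lambda>\<eta>. lor (1,\<eta>) \<sigma>' - lor (1,\<eta>) \<sigma>) \<eta> = 0"
    apply (rule zero_exists[OF a(1) b(1)])
       apply (use h1 h2 a b in \<open>auto simp: support_plane_epi_minus_def\<close>)[2]
    by (simp only: lor_seg) (simp add: algebra_simps)
  then obtain \<eta> where "\<eta> \<in> ball 0 1" "lor (1,\<eta>) \<sigma> = lor (1,\<eta>) \<sigma>'" by auto
  then show "spacelike_geodesic (spacelike_plane \<sigma> \<inter> spacelike_plane \<sigma>')"
    using geod ne by blast
qed

end
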